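(* Let $n\ge1$, let $(p_j,u_j)$, $0\le j\le n$, be the coordinates of the trajectory $T_n$, and put $\|j\|=\min(j,n-j)$. Then for $0\le j\le n$, $$|p_j-1|\le 2^{-\|j\|}\qquad\text{and}\qquad 0<1-p_ju_j\le \phi\,2^{-\|j\|},$$ where $\phi=(1+\sqrt5)/2$.
   Context: $\Phi$ is the partial map of $\mathbb{R}^2$ defined for $p\ne0$ by $\Phi(p,u)=\bigl(p^2(u+1)-1,\ 1/p\bigr)$. For $n\ge1$, the trajectory $T_n$ is the (existing and unique) finite sequence $(p_j,u_j)$, $j=0,\dots,n$, with $(p_j,u_j)=\Phi(p_{j-1},u_{j-1})$ for $1\le j\le n$, $u_0=0$, $p_n=0$, and $p_j>0$ for $0\le j\le n-1$. *)

theory Defs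
  imports Complex_Main
begin

text \<open>The partial map Phi(p,u) = (p^2 (u+1) - 1, 1/p), meaningful for p \<noteq> 0.\<close>
definition Phi :: "real \<times> real \<Rightarrow> real \<times> real" where
  "Phi pu = (let (p, u) = pu in (p^2 * (u + 1) - 1, 1 / p))"

definition is_trajectory :: "nat \<Rightarrow> (nat \<Rightarrow> real) \<Rightarrow> (nat \<Rightarrow> real) \<Rightarrow> bool" where
  "is_trajectory n p u \<longleftrightarrow>
     u 0 = 0 \<and> p n = 0 \<and> (\<forall>j<n. p j > 0) \<and>
     (\<forall>j. 1 \<le> j \<and> j \<le> n \<longrightarrow> (p j, u j) = Phi (p (j - 1), u (j - 1)))"

definition golden_ratio :: real where
  "golden_ratio = (1 + sqrt 5) / 2"

end

theory Submission
  imports Defs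
begin

lemma grow: "(x::real) > 0 \<Longrightarrow> y \<le> 0 \<Longrightarrow> x \<le> x * (1 - y)"
proof -
  assume "x > 0" "y \<le> 0"
  hence "x * y \<le> 0" by (simp add: mult_nonneg_nonpos)
  thus ?thesis by (simp add: algebra_simps)
qed

lemma shrink: "(x::real) > 0 \<Longrightarrow> y > 0 \<Longrightarrow> x * (1 - y) < x"
proof -
  assume "x > 0" "y > 0"
  hence "x * y > 0" by simp
  thus ?thesis by (simp add: algebra_simps)
qed

locale tr =
  fixes n :: nat and p e :: "nat \<Rightarrow> real"
  assumes n1: "n \<ge> 1" and e0: "e 0 = 1" and pn: "p n = 0"
    and ppos: "\<And>j. j < n \<Longrightarrow> p j > 0"
    and erec: "\<And>j. j < n \<Longrightarrow> e (Suc j) = e j - p j + 1 / p j"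
    and prec: "\<And>j. j < n \<Longrightarrow> p (Suc j) = p j * (1 - e (Suc j))"
begin

lemma fwd: "\<forall>j. j + k = n \<longrightarrow> p j \<ge> 1 \<longrightarrow> e j \<le> 0 \<longrightarrow> False"
proof (induction k)
  case 0
  then show ?case using pn by auto
next
  case (Suc k)
  show ?case
  proof (intro allI impI)
    fix j assume a: "j + Suc k = n" "p j \<ge> 1" "e j \<le> 0"
    have jn: "j < n" using a by simp
    have "1 / p j \<le> 1" using a by simp
    hence "p j - 1 / p j \<ge> 0" using a by linarith
    hence e1: "e (Suc j) \<le> 0" using erec[OF jn] a by linarith
    have "p (Suc j) \<ge> p j" using prec[OF jn] e1 a grow by simp
    hence p1: "p (Suc j) \<ge> 1" using a by linarith
    have "Suc j + k = n" using a by simp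
    then show False using Suc.IH e1 p1 by blast
  qed
qed

lemma bwd: "j \<le> n \<Longrightarrow> p j \<le> 1 \<Longrightarrow> e j \<le> 0 \<Longrightarrow> False"
proof (induction j)
  case 0
  then show ?case using e0 by simp
next
  case (Suc j)
  have jn: "j < n" using Suc by simp
  have pj: "p j > 0" using ppos[OF jn] .
  have "p (Suc j) \<ge> p j" using prec[OF jn] Suc.prems(3) pj grow by simp
  hence p1: "p j \<le> 1" using Suc.prems by linarith
  have "1 / p j \<ge> 1" using pj p1 by simp
  hence "e (Suc j) \<ge> e j" using erec[OF jn] p1 by linarith
  then show ?case using Suc p1 jn by simp
qed

lemma epos: "j \<le> n \<Longrightarrow> e j > 0"
proof (rule ccontr)
  assume a: "j \<le> n" "\<not> e j > 0"
  show False
  proof (cases "p j \<ge> 1")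
    case True
    have "j + (n - j) = n" using a by simp
    moreover have "e j \<le> 0" using a by simp
    ultimately show False using fwd[of "n - j"] True by blast
  next
    case False
    hence "p j \<le> 1" by simp
    moreover have "e j \<le> 0" using a by simp
    ultimately show False using bwd a(1) by blast
  qed
qed

lemma dec: "j < n \<Longrightarrow> p (Suc j) < p j"
proof -
  assume jn: "j < n"
  have "e (Suc j) > 0" using epos jn by simp
  then show ?thesis using prec[OF jn] ppos[OF jn] shrink by simp
qed

lemma mono: "i \<le> j \<Longrightarrow> j \<le> n \<Longrightarrow> p j \<le> p i"
proof (induction j)
  case 0
  then show ?case by simp
next
  case (Suc j)
  show ?case
  proof (cases "i = Suc j")
    case True then show ?thesis by simp
  next
    case False
    then have "i \<le> j" using Suc by simp
    then show ?thesis using Suc dec[of j] by force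
  qed
qed

lemma cstep: "Suc k < n \<Longrightarrow> p (Suc k) \<ge> 1 \<Longrightarrow> 1 / p k < 2 / p (Suc k) - 1"
proof -
  assume a: "Suc k < n" "p (Suc k) \<ge> 1"
  have "e (Suc (Suc k)) > 0" using epos a by simp
  hence ei: "e (Suc k) > p (Suc k) - 1 / p (Suc k)" using erec[OF a(1)] by linarith
  have kn: "k < n" using a by simp
  have pk: "p k > 0" using ppos kn by simp
  have ps: "p (Suc k) > 0" using a by simp
  have "1 / p k = (1 - e (Suc k)) / p (Suc k)" using prec[OF kn] pk ps
    by (simp add: field_simps)
  also have "\<dots> < (1 - p (Suc k) + 1 / p (Suc k)) / p (Suc k)"
    using ei ps by (simp add: divide_strict_right_mono)
  also have "\<dots> \<le> 2 / p (Suc k) - 1"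
  proof -
    have "1 / p (Suc k) \<le> 1" using a by simp
    hence "1 - p (Suc k) + 1 / p (Suc k) \<le> 2 - p (Suc k)" by linarith
    hence "(1 - p (Suc k) + 1 / p (Suc k)) / p (Suc k) \<le> (2 - p (Suc k)) / p (Suc k)"
      using ps by (simp add: divide_right_mono)
    also have "\<dots> = 2 / p (Suc k) - 1" using ps by (simp add: field_simps)
    finally show ?thesis .
  qed
  finally show ?thesis .
qed

lemma c0: "1 - 1 / p 0 \<le> 2 / 5"
proof -
  have e1: "e 1 > 0" using epos n1 by simp
  have n0: "0 < n" using n1 by simp
  have p0: "p 0 > 0" using ppos n0 .
  have "e 1 = 1 - p 0 + 1 / p 0" using erec[OF n0] e0 by simp
  hence h: "1 - p 0 + 1 / p 0 > 0" using e1 by simp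
  have "p 0 < 5 / 3"
  proof (rule ccontr)
    assume "\<not> p 0 < 5 / 3"
    hence "p 0 \<ge> 5/3" by simp
    hence "1 / p 0 \<le> 3 / 5" using p0 by (simp add: field_simps)
    thus False using h \<open>p 0 \<ge> 5/3\<close> by linarith
  qed
  hence "1 / p 0 \<ge> 3 / 5" using p0 by (simp add: field_simps)
  thus ?thesis by simp
qed

lemma cbound: "j < n \<Longrightarrow> p j \<ge> 1 \<Longrightarrow> 1 - 1 / p j \<le> (2/5) / 2^j"
proof (induction j)
  case 0
  then show ?case using c0 by simp
next
  case (Suc j)
  have "p j \<ge> 1" using dec[of j] Suc.prems by simp
  hence ih: "1 - 1 / p j \<le> (2/5) / 2^j" using Suc by simp
  have "1 / p j < 2 / p (Suc j) - 1" using cstep Suc.prems by simp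
  hence "1 - 1 / p (Suc j) < (1 - 1 / p j) / 2" by simp
  also have "\<dots> \<le> (2/5) / 2^(Suc j)" using ih by simp
  finally show ?case by simp
qed

lemma dstep: "i < n \<Longrightarrow> p i \<le> 1 \<Longrightarrow> 1 - p (Suc i) > 2 * (1 - p i)"
proof -
  assume a: "i < n" "p i \<le> 1"
  have pi: "p i > 0" using ppos a by simp
  have "e i > 0" using epos a by simp
  hence es: "e (Suc i) > 1 / p i - p i" using erec[OF a(1)] by linarith
  have "p (Suc i) < p i * (1 - (1 / p i - p i))"
    using prec[OF a(1)] es pi by (simp add: mult_strict_left_mono)
  also have "\<dots> = p i - 1 + p i * p i" using pi by (simp add: field_simps)
  also have "\<dots> \<le> 2 * p i - 1"
  proof -
    have "p i * p i \<le> p i * 1" using a pi by (intro mult_left_mono) auto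
    thus ?thesis by simp
  qed
  finally show ?thesis by simp
qed

lemma dlast: "1 - p (n - 1) \<le> 2 / 5"
proof -
  have nn: "n - 1 < n" using n1 by simp
  have sn: "Suc (n - 1) = n" using n1 by simp
  have p0: "p (n - 1) > 0" using ppos nn .
  have "e (n - 1) > 0" using epos by simp
  moreover have "e n = 1" using prec[OF nn] sn pn p0 by simp
  ultimately have h: "1 / p (n - 1) - p (n - 1) < 1" using erec[OF nn] sn by simp
  have "p (n - 1) > 3 / 5"
  proof (rule ccontr)
    assume "\<not> p (n - 1) > 3 / 5"
    hence "p (n - 1) \<le> 3/5" by simp
    hence "1 / p (n - 1) \<ge> 5 / 3" using p0 by (simp add: field_simps)
    thus False using h \<open>p (n - 1) \<le> 3/5\<close> by linarith
  qed
  thus ?thesis by simp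
qed

lemma dbound_aux: "\<forall>j. j + k = n - 1 \<longrightarrow> p j \<le> 1 \<longrightarrow> 1 - p j \<le> (2/5) / 2^k"
proof (induction k)
  case 0
  show ?case
  proof (intro allI impI)
    fix j assume "j + 0 = n - 1"
    hence "j = n - 1" by simp
    thus "1 - p j \<le> (2/5) / 2^0" using dlast by simp
  qed
next
  case (Suc k)
  show ?case
  proof (intro allI impI)
    fix j assume a: "j + Suc k = n - 1" "p j \<le> 1"
    have jn: "j < n" using a n1 by simp
    have "p (Suc j) \<le> 1" using dec[OF jn] a by simp
    moreover have "Suc j + k = n - 1" using a by simp
    ultimately have ih: "1 - p (Suc j) \<le> (2/5) / 2^k" using Suc.IH by blast
    have "1 - p (Suc j) > 2 * (1 - p j)" using dstep jn a by simp
    hence "1 - p j < (1 - p (Suc j)) / 2" by simp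
    also have "\<dots> \<le> (2/5) / 2^(Suc k)" using ih by simp
    finally show "1 - p j \<le> (2/5) / 2^(Suc k)" by simp
  qed
qed

lemma dbound: "j < n \<Longrightarrow> p j \<le> 1 \<Longrightarrow> 1 - p j \<le> (4/5) / 2^(n - j)"
proof -
  assume a: "j < n" "p j \<le> 1"
  have "j + (n - 1 - j) = n - 1" using a by simp
  hence "1 - p j \<le> (2/5) / 2^(n - 1 - j)" using dbound_aux[of "n - 1 - j"] a by blast
  also have "(2/5) / 2^(n - 1 - j) = (4/5) / (2::real)^(n - j)"
  proof -
    have "n - j = Suc (n - 1 - j)" using a by simp
    thus ?thesis by simp
  qed
  finally show ?thesis .
qed

end


lemma phi_ge: "golden_ratio \<ge> 8 / 5"
proof -
  have "(11/5::real)\<^sup>2 \<le> 5" by (simp add: power2_eq_square)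
  hence "11/5 \<le> sqrt 5" by (rule real_le_rsqrt)
  thus ?thesis unfolding golden_ratio_def by simp
qed

lemma pw: "(2::real) powi (- int m) = 1 / 2 ^ m"
  by (simp add: power_int_minus_divide)

lemma frac_le: "(a::real) \<le> c / 2^k \<Longrightarrow> m \<le> k \<Longrightarrow> c \<ge> 0 \<Longrightarrow> a \<le> c / 2^m"
proof -
  assume h: "a \<le> c / 2^k" "m \<le> k" "c \<ge> 0"
  have "(2::real)^m \<le> 2^k" using h(2) by (rule power_increasing) simp
  hence "c / 2^k \<le> c / 2^m" using h(3) by (intro divide_left_mono) auto
  thus ?thesis using h(1) by linarith
qed

theorem lemma7:
  fixes n :: nat and p u :: "nat \<Rightarrow> real"
  assumes "n \<ge> 1" and "is_trajectory n p u"
  shows "\<forall>j \<le> n. \<bar>p j - 1\<bar> \<le> 2 powi (- int (min j (n - j))) \<and>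
            0 < 1 - p j * u j \<and>
            1 - p j * u j \<le> golden_ratio * 2 powi (- int (min j (n - j)))"
proof -
  have u0: "u 0 = 0" and pn: "p n = 0" and ppos: "\<And>j. j < n \<Longrightarrow> p j > 0"
    using assms(2) unfolding is_trajectory_def by auto
  have st: "p (Suc j) = p j ^ 2 * (u j + 1) - 1 \<and> u (Suc j) = 1 / p j" if "j < n" for j
  proof -
    have "(p (Suc j), u (Suc j)) = Phi (p j, u j)"
      using assms(2) that unfolding is_trajectory_def by (metis Suc_leI diff_Suc_1 le_add1 plus_1_eq_Suc)
    thus ?thesis unfolding Phi_def by simp
  qed
  define e where "e j = 1 - p j * u j" for j
  interpret T: tr n p e
  proof
    show "n \<ge> 1" using assms(1) .
    show "e 0 = 1" using u0 e_def by simp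
    show "p n = 0" using pn .
    show "\<And>j. j < n \<Longrightarrow> p j > 0" using ppos .
    show "e (Suc j) = e j - p j + 1 / p j" if "j < n" for j
    proof -
      have a: "p (Suc j) = p j ^ 2 * (u j + 1) - 1" and b: "u (Suc j) = 1 / p j" using st[OF that] by simp_all
      show ?thesis unfolding e_def a b using ppos[OF that] by (simp add: field_simps power2_eq_square)
    qed
    show "p (Suc j) = p j * (1 - e (Suc j))" if "j < n" for j
    proof -
      have b: "u (Suc j) = 1 / p j" using st[OF that] by simp
      show ?thesis unfolding e_def b using ppos[OF that] by (simp add: field_simps)
    qed
  qed
  have p0: "p 0 \<le> 5 / 3"
  proof -
    have "p 0 > 0" using ppos assms(1) by simp
    moreover have "1 / p 0 \<ge> 3 / 5" using T.c0 by simp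
    ultimately show ?thesis by (simp add: field_simps)
  qed
  have phi: "golden_ratio \<ge> 8/5" by (rule phi_ge)
  show ?thesis
  proof (intro allI impI)
    fix j assume jn: "j \<le> n"
    define m where "m = min j (n - j)"
    have mj: "m \<le> j" and mnj: "m \<le> n - j" unfolding m_def by auto
    have A: "\<bar>p j - 1\<bar> \<le> 1 / 2^m"
    proof (cases "j = n")
      case True
      then have "m = 0" unfolding m_def by simp
      then show ?thesis using True pn by simp
    next
      case False
      hence jl: "j < n" using jn by simp
      have pj: "p j > 0" using ppos jl .
      show ?thesis
      proof (cases "p j \<ge> 1")
        case True
        have c: "1 - 1 / p j \<le> (2/5) / 2^j" using T.cbound jl True by simp
        have "p j \<le> p 0" using T.mono[of 0 j] jn by simp
        hence "p j \<le> 5/3" using p0 by simp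
        have "p j - 1 = p j * (1 - 1 / p j)" using pj by (simp add: field_simps)
        also have "\<dots> \<le> (5/3) * ((2/5) / 2^j)"
          using c \<open>p j \<le> 5/3\<close> True by (intro mult_mono) auto
        also have "\<dots> = (2/3) / 2^j" by simp
        finally have "p j - 1 \<le> (2/3) / 2^j" .
        hence "p j - 1 \<le> (2/3) / 2^m" by (rule frac_le[OF _ mj]) simp
        moreover have "(2/3::real) / 2^m \<le> 1 / 2^m" by (rule divide_right_mono) simp_all
        ultimately show ?thesis using True by simp
      next
        case False
        have "1 - p j \<le> (4/5) / 2^(n-j)" using T.dbound jl False by simp
        hence "1 - p j \<le> (4/5) / 2^m" by (rule frac_le[OF _ mnj]) simp
        moreover have "(4/5::real) / 2^m \<le> 1 / 2^m" by (rule divide_right_mono) simp_all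
        ultimately show ?thesis using False by simp
      qed
    qed
    have B1: "0 < e j" using T.epos jn by simp
    have B2: "e j \<le> golden_ratio / 2^m"
    proof -
      have gm: "(8/5) / 2^m \<le> golden_ratio / 2^m" using phi by (intro divide_right_mono) simp_all
      have one: "(1::real) \<le> golden_ratio / 2^0" using phi by simp
      show ?thesis
      proof (cases "j = 0 \<or> j = n")
        case True
        then have m0: "m = 0" unfolding m_def by auto
        have "e j = 1"
        proof (cases "j = 0")
          case True then show ?thesis using u0 e_def by simp
        next
          case False
          then have jn': "j = n" using \<open>j = 0 \<or> j = n\<close> by simp
          show ?thesis unfolding e_def using jn' pn by simp
        qed
        then show ?thesis using m0 one by simp
      next
        case False
        then obtain k where jk: "j = Suc k" and jl: "j < n" using jn by (cases j) auto
        have kn: "k < n" using jl jk by simp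
        have pk: "p k > 0" using ppos kn .
        have pj: "p j > 0" using ppos jl .
        have pjk: "p j \<le> p k" using T.mono[of k j] jn jk by simp
        have ej: "e j = 1 - p j / p k" using T.prec[OF kn] pk jk by (simp add: field_simps)
        show ?thesis
        proof (cases "p k \<le> 1")
          case True
          have "p j / p k \<ge> p j" using pj pk True by (simp add: field_simps mult_left_le)
          hence "e j \<le> 1 - p j" using ej by simp
          also have "\<dots> \<le> (4/5) / 2^(n-j)" using T.dbound jl True pjk by simp
          finally have "e j \<le> (4/5) / 2^m" by (rule frac_le[OF _ mnj]) simp
          moreover have "(4/5::real) / 2^m \<le> golden_ratio / 2^m" using phi by (intro divide_right_mono) simp_all
          ultimately show ?thesis by simp
        next
          case False
          have ck: "1 - 1 / p k \<le> (2/5) / 2^k" using T.cbound kn False by simp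
          have "(2/5::real) / 2^k = (4/5) / 2^j" using jk by simp
          hence "1 - 1 / p k \<le> (4/5) / 2^j" using ck by simp
          hence ck': "1 - 1 / p k \<le> (4/5) / 2^m" by (rule frac_le[OF _ mj]) simp
          have dj: "(1 - p j) / p k \<le> (4/5) / 2^m"
          proof (cases "p j \<le> 1")
            case True
            have "(1 - p j) / p k \<le> 1 - p j" using False True pk by (simp add: divide_le_eq mult_le_cancel_left1)
            also have "\<dots> \<le> (4/5) / 2^(n-j)" using T.dbound jl True by simp
            finally show ?thesis by (rule frac_le[OF _ mnj]) simp
          next
            case False
            hence "(1 - p j) / p k \<le> 0" using pk by (simp add: divide_nonpos_pos)
            also have "0 \<le> (4/5::real) / 2^m" by simp
            finally show ?thesis .
          qed
          have "e j = (1 - 1 / p k) + (1 - p j) / p k" unfolding ej using pk by (simp add: field_simps)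
          also have "\<dots> \<le> (4/5) / 2^m + (4/5) / 2^m" using ck' dj by simp
          also have "\<dots> = (8/5) / 2^m" by simp
          finally show ?thesis using gm by simp
        qed
      qed
    qed
    show "\<bar>p j - 1\<bar> \<le> 2 powi (- int (min j (n - j))) \<and>
            0 < 1 - p j * u j \<and>
            1 - p j * u j \<le> golden_ratio * 2 powi (- int (min j (n - j)))"
      using A B1 B2 unfolding pw m_def[symmetric] e_def by simp
  qed
qed

end
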